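(* Let $\gamma>0$, let $(\mu_t^\gamma)$ be a weak solution of the kinetic Vlasov--Fokker--Planck equation with parameter $\gamma$, $\rho_t^\gamma=\pi^x_\#\mu_t^\gamma$, $\bar\rho_t^\gamma=(\pi^x\circ\Gamma^\gamma)_\#\mu_t^\gamma$, let $\bar\jmath_t^\gamma(dx)=\int_{\mathbb{R}^d}\mathsf{F}(x-v/\gamma,\rho_t^\gamma)(\Gamma^\gamma_\#\mu_t^\gamma)(dxdv)$ and $\mathsf{e}_t^\gamma(x)=\frac{d\bar\jmath_t^\gamma}{d\bar\rho_t^\gamma}(x)-\mathsf{F}(x,\bar\rho_t^\gamma)$. Then \[\|\mathsf{e}_t^\gamma\|^2_{L^2(\bar\rho_t^\gamma)}\le\iint_{\mathbb{R}^d\times\mathbb{R}^d}\big|\mathsf{F}(x,\rho_t^\gamma)-\mathsf{F}(x+v/\gamma,\bar\rho_t^\gamma)\big|^2\,d\mu_t^\gamma.\]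
   Context: $\Gamma^\gamma(x,v)=(x+v/\gamma,v)$, $\pi^x(x,v)=x$. $\mathsf{F}(x,\rho)=-\nabla\Phi(x)-(\nabla K\star\rho)(x)$ with $\Phi\ge0$ and $K$ given potentials. Kinetic equation: $\partial_t\mu_t+\gamma v\cdot\nabla_x\mu_t+\gamma\nabla_v\cdot(\mu_t(\mathsf{F}(x,\rho_t)-\gamma v))=\gamma^2\Delta_v\mu_t$, $\rho_t=\pi^x_\#\mu_t$; weak solutions satisfy it in duality with $\mathcal{C}_c^\infty(\mathbb{R}^{2d})$ test functions. *)

theory Defs
  imports "HOL-Probability.Probability"
begin

text \<open>Phase space \<open>R^d x R^d\<close> is modelled as \<open>'a \<times> 'a\<close> with \<open>'a :: euclidean_space\<close>
  (so \<open>d = DIM('a)\<close>).\<close>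

definition Gam :: "real \<Rightarrow> 'a::euclidean_space \<times> 'a \<Rightarrow> 'a \<times> 'a" where
  "Gam \<gamma> p = (fst p + (1/\<gamma>) *\<^sub>R snd p, snd p)"

definition pix :: "'a \<times> 'a \<Rightarrow> 'a" where
  "pix p = fst p"

definition grad :: "('a::euclidean_space \<Rightarrow> real) \<Rightarrow> 'a \<Rightarrow> 'a" where
  "grad f x = (\<Sum>b\<in>Basis. frechet_derivative f (at x) b *\<^sub>R b)"

definition Force :: "('a::euclidean_space \<Rightarrow> real) \<Rightarrow> ('a \<Rightarrow> real) \<Rightarrow> 'a \<Rightarrow> 'a measure \<Rightarrow> 'a" where
  "Force \<Phi> K x \<rho> = - grad \<Phi> x - (\<integral>y. grad K (x - y) \<partial>\<rho>)"

fun Ck :: "nat \<Rightarrow> ('b::euclidean_space \<Rightarrow> real) \<Rightarrow> bool" where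
  "Ck 0 f = continuous_on UNIV f"
| "Ck (Suc n) f = (f differentiable_on UNIV \<and> continuous_on UNIV f \<and>
      (\<forall>b\<in>Basis. Ck n (\<lambda>p. frechet_derivative f (at p) b)))"

definition test_fun :: "('b::euclidean_space \<Rightarrow> real) \<Rightarrow> bool" where
  "test_fun \<phi> \<longleftrightarrow> (\<forall>n. Ck n \<phi>) \<and> compact (closure {p. \<phi> p \<noteq> 0})"

text \<open>Generator applied to a test function:
  \<open>\<gamma> v\<cdot>\<nabla>_x\<phi> + \<gamma> (F(x,\<rho>) - \<gamma> v)\<cdot>\<nabla>_v\<phi> + \<gamma>^2 \<Delta>_v\<phi>\<close>.\<close>
definition gen :: "real \<Rightarrow> ('a::euclidean_space \<Rightarrow> real) \<Rightarrow> ('a \<Rightarrow> real) \<Rightarrow> 'a measure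
    \<Rightarrow> ('a \<times> 'a \<Rightarrow> real) \<Rightarrow> 'a \<times> 'a \<Rightarrow> real" where
  "gen \<gamma> \<Phi> K \<rho> \<phi> p =
     (let x = fst p; v = snd p; D = (\<lambda>q. frechet_derivative \<phi> (at q)) in
       \<gamma> * D p (v, 0)
     + \<gamma> * D p (0, Force \<Phi> K x \<rho> - \<gamma> *\<^sub>R v)
     + \<gamma>^2 * (\<Sum>b\<in>Basis. frechet_derivative (\<lambda>q. D q (0, b)) (at p) (0, b)))"

definition weak_solution :: "real \<Rightarrow> ('a::euclidean_space \<Rightarrow> real) \<Rightarrow> ('a \<Rightarrow> real)
    \<Rightarrow> (real \<Rightarrow> ('a \<times> 'a) measure) \<Rightarrow> bool" where
  "weak_solution \<gamma> \<Phi> K \<mu> \<longleftrightarrow>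
     (\<forall>t\<ge>0. prob_space (\<mu> t) \<and> sets (\<mu> t) = sets borel) \<and>
     (\<forall>\<phi>. test_fun \<phi> \<longrightarrow>
        (\<forall>t\<ge>0. integrable (\<mu> t) (gen \<gamma> \<Phi> K (distr (\<mu> t) borel pix) \<phi>)) \<and>
        (\<forall>s t. 0 \<le> s \<longrightarrow> s \<le> t \<longrightarrow>
           set_integrable lborel {s..t}
             (\<lambda>r. \<integral>p. gen \<gamma> \<Phi> K (distr (\<mu> r) borel pix) \<phi> p \<partial>\<mu> r) \<and>
           (\<integral>p. \<phi> p \<partial>\<mu> t) - (\<integral>p. \<phi> p \<partial>\<mu> s)
             = (LINT r:{s..t}|lborel. \<integral>p. gen \<gamma> \<Phi> K (distr (\<mu> r) borel pix) \<phi> p \<partial>\<mu> r)))"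

end

theory Submission
  imports Defs
begin


definition Eset :: "('a::euclidean_space \<Rightarrow> real) \<Rightarrow> 'a \<Rightarrow> real \<Rightarrow> real \<Rightarrow> 'a set" where
  "Eset f w e d = {x. \<forall>y z. norm (y - x) < d \<longrightarrow> norm (z - x) < d \<longrightarrow>
      \<bar>f y - f z - w \<bullet> (y - z)\<bar> \<le> e * (norm (y - x) + norm (z - x))}"

lemma closed_Eset: "closed (Eset f w e d)"
  unfolding Eset_def
  apply (intro closed_Collect_all closed_Collect_imp open_Collect_less closed_Collect_le)
  by (intro continuous_intros)+

lemma Eset_mono_d: "x \<in> Eset f w e d \<Longrightarrow> d' \<le> d \<Longrightarrow> x \<in> Eset f w e d'"
  unfolding Eset_def by auto

lemma Eset_mono_w:
  assumes "x \<in> Eset f w e d" "norm (w' - w) \<le> h"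
  shows "x \<in> Eset f w' (e + h) d"
  unfolding Eset_def
proof (intro CollectI allI impI)
  fix y z assume y: "norm (y - x) < d" and z: "norm (z - x) < d"
  have 1: "\<bar>f y - f z - w \<bullet> (y - z)\<bar> \<le> e * (norm (y - x) + norm (z - x))"
    using assms(1) y z unfolding Eset_def by blast
  have "\<bar>(w' - w) \<bullet> (y - z)\<bar> \<le> norm (w' - w) * norm (y - z)"
    by (rule Cauchy_Schwarz_ineq2)
  also have "\<dots> \<le> h * (norm (y - x) + norm (z - x))"
  proof (rule mult_mono)
    show "norm (y - z) \<le> norm (y - x) + norm (z - x)"
      using norm_triangle_ineq4[of "y - x" "z - x"] by simp
  qed (use order_trans[OF norm_ge_zero assms(2)] assms(2) in auto)
  finally have 2: "\<bar>(w' - w) \<bullet> (y - z)\<bar> \<le> h * (norm (y - x) + norm (z - x))" .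
  have "f y - f z - w' \<bullet> (y - z) = (f y - f z - w \<bullet> (y - z)) - (w' - w) \<bullet> (y - z)"
    by (simp add: inner_diff_left)
  then show "\<bar>f y - f z - w' \<bullet> (y - z)\<bar> \<le> (e + h) * (norm (y - x) + norm (z - x))"
    using 1 2 by (smt (verit) distrib_right)
qed

lemma Eset_deriv:
  assumes "(f has_derivative (\<lambda>h. g \<bullet> h)) (at x)" "e > 0"
  shows "\<exists>d>0. x \<in> Eset f g e d"
proof -
  from assms(1)[unfolded has_derivative_within_alt] assms(2)
  obtain d where d: "d > 0" "\<And>y. norm (y - x) < d \<Longrightarrow> norm (f y - f x - g \<bullet> (y - x)) \<le> e * norm (y - x)"
    by blast
  have "x \<in> Eset f g e d"
    unfolding Eset_def
  proof (intro CollectI allI impI)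
    fix y z assume y: "norm (y - x) < d" and z: "norm (z - x) < d"
    have "f y - f z - g \<bullet> (y - z) = (f y - f x - g \<bullet> (y - x)) - (f z - f x - g \<bullet> (z - x))"
      by (simp add: inner_diff_right)
    then show "\<bar>f y - f z - g \<bullet> (y - z)\<bar> \<le> e * (norm (y - x) + norm (z - x))"
      using d(2)[OF y] d(2)[OF z] by (smt (verit) distrib_left real_norm_def)
  qed
  with d show ?thesis by blast
qed

lemma Eset_close:
  assumes "x \<in> Eset f w1 e1 d1" "x \<in> Eset f w2 e2 d2" "d1 > 0" "d2 > 0"
  shows "norm (w1 - w2) \<le> e1 + e2"
proof -
  define u where "u = (if w1 = w2 then (SOME b. b \<in> (Basis::'a set)) else (1 / norm (w1 - w2)) *\<^sub>R (w1 - w2))"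
  define t where "t = min d1 d2 / 2"
  have t: "t > 0" "t < d1" "t < d2" using assms by (auto simp: t_def)
  have nu: "norm u = 1" by (simp add: u_def SOME_Basis)
  have wu: "(w1 - w2) \<bullet> u = norm (w1 - w2)"
    by (simp add: u_def inner_commute power2_norm_eq_inner[symmetric] power2_eq_square)
  define y where "y = x + t *\<^sub>R u"
  have ny: "norm (y - x) = t" using t nu by (simp add: y_def)
  have E1: "\<And>y z. norm (y - x) < d1 \<Longrightarrow> norm (z - x) < d1 \<Longrightarrow>
      \<bar>f y - f z - w1 \<bullet> (y - z)\<bar> \<le> e1 * (norm (y - x) + norm (z - x))"
    using assms(1) unfolding Eset_def by blast
  have E2: "\<And>y z. norm (y - x) < d2 \<Longrightarrow> norm (z - x) < d2 \<Longrightarrow>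
      \<bar>f y - f z - w2 \<bullet> (y - z)\<bar> \<le> e2 * (norm (y - x) + norm (z - x))"
    using assms(2) unfolding Eset_def by blast
  have 1: "\<bar>f y - f x - w1 \<bullet> (y - x)\<bar> \<le> e1 * t"
    using E1[of y x] t ny assms(3) by simp
  have 2: "\<bar>f y - f x - w2 \<bullet> (y - x)\<bar> \<le> e2 * t"
    using E2[of y x] t ny assms(4) by simp
  have "t * norm (w1 - w2) = (w1 - w2) \<bullet> (y - x)"
    using wu by (simp add: y_def)
  also have "\<dots> = (f y - f x - w2 \<bullet> (y - x)) - (f y - f x - w1 \<bullet> (y - x))"
    by (simp add: inner_diff_left)
  also have "\<dots> \<le> (e1 + e2) * t" using 1 2 by (smt (verit) distrib_right)
  finally show ?thesis using t by (simp add: mult.commute)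
qed


lemma Eset_deriv_close:
  assumes "(f has_derivative (\<lambda>h. g \<bullet> h)) (at x)" "x \<in> Eset f w e d" "d > 0"
  shows "norm (w - g) \<le> e"
proof (rule field_le_epsilon)
  fix h :: real assume "h > 0"
  then obtain d' where "d' > 0" "x \<in> Eset f g h d'" using Eset_deriv[OF assms(1)] by blast
  then show "norm (w - g) \<le> e + h" using Eset_close[OF assms(2) _ assms(3)] by blast
qed

lemma Eset_dense:
  fixes W :: "'a::euclidean_space set"
  assumes W: "\<And>X. open X \<Longrightarrow> X \<noteq> {} \<Longrightarrow> \<exists>d\<in>W. d \<in> X"
    and der: "(f has_derivative (\<lambda>h. g \<bullet> h)) (at x)" and e: "e > 0"
  shows "\<exists>w\<in>W. norm (w - g) \<le> e / 2 \<and> (\<exists>m. x \<in> Eset f w e (inverse (real (Suc m))))"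
proof -
  obtain w where w: "w \<in> W" "w \<in> ball g (e/2)" using W[of "ball g (e/2)"] e by auto
  then have nw: "norm (w - g) \<le> e / 2" by (simp add: dist_norm norm_minus_commute)
  obtain d where d: "d > 0" "x \<in> Eset f g (e/2) d" using Eset_deriv[OF der, of "e/2"] e by auto
  have "x \<in> Eset f w (e/2 + e/2) d" by (rule Eset_mono_w[OF d(2) nw])
  then have x: "x \<in> Eset f w e d" by simp
  obtain m where m: "inverse (real (Suc m)) < d" using reals_Archimedean[OF d(1)] by blast
  show ?thesis using w(1) nw Eset_mono_d[OF x less_imp_le[OF m]] by blast
qed

lemma Eset_limit:
  fixes f :: "'a::euclidean_space \<Rightarrow> real"
  assumes "\<forall>n. \<exists>w\<in>W. \<exists>m. x \<in> Eset f w (inverse (real (Suc n))) (inverse (real (Suc m)))"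
  shows "\<exists>g. (f has_derivative (\<lambda>h. g \<bullet> h)) (at x)"
proof -
  from assms obtain ws ms where wm: "\<And>n. x \<in> Eset f (ws n) (inverse (real (Suc n))) (inverse (real (Suc (ms n))))"
    by metis
  have cl: "norm (ws n - ws k) \<le> inverse (real (Suc n)) + inverse (real (Suc k))" for n k
    by (rule Eset_close[OF wm wm]) auto
  have "Cauchy ws"
  proof (rule CauchyI)
    fix e :: real assume "e > 0"
    then obtain M where M: "inverse (real (Suc M)) < e / 2" using reals_Archimedean[of "e/2"] by auto
    have "norm (ws m - ws n) < e" if "m \<ge> M" "n \<ge> M" for m n
    proof -
      have "inverse (real (Suc m)) \<le> inverse (real (Suc M))" "inverse (real (Suc n)) \<le> inverse (real (Suc M))"
        using that by (auto intro!: le_imp_inverse_le)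
      then show ?thesis using cl[of m n] M by linarith
    qed
    then show "\<exists>M. \<forall>m\<ge>M. \<forall>n\<ge>M. norm (ws m - ws n) < e" by blast
  qed
  then obtain g where g: "ws \<longlonglongrightarrow> g" using Cauchy_convergent_iff convergent_def by blast
  have wg: "norm (ws n - g) \<le> inverse (real (Suc n))" for n
  proof -
    have "(\<lambda>k. norm (ws n - ws k)) \<longlonglongrightarrow> norm (ws n - g)"
      by (intro tendsto_intros g)
    moreover have "(\<lambda>k. inverse (real (Suc n)) + inverse (real (Suc k))) \<longlonglongrightarrow> inverse (real (Suc n)) + 0"
      by (intro tendsto_intros LIMSEQ_inverse_real_of_nat)
    moreover have "\<forall>\<^sub>F k in sequentially. norm (ws n - ws k) \<le> inverse (real (Suc n)) + inverse (real (Suc k))"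
      by (rule always_eventually) (use cl in blast)
    ultimately show ?thesis
      using tendsto_le[OF trivial_limit_sequentially] by fastforce
  qed
  have "(f has_derivative (\<lambda>h. g \<bullet> h)) (at x within UNIV)"
    unfolding has_derivative_within_alt
  proof (intro conjI allI impI bounded_linear_inner_right)
    fix e :: real assume "e > 0"
    then obtain n where n: "inverse (real (Suc n)) < e / 2" using reals_Archimedean[of "e/2"] by auto
    have "norm (f y - f x - g \<bullet> (y - x)) \<le> e * norm (y - x)"
      if y: "norm (y - x) < inverse (real (Suc (ms n)))" for y
    proof -
      have E: "\<And>y z. norm (y - x) < inverse (real (Suc (ms n))) \<Longrightarrow> norm (z - x) < inverse (real (Suc (ms n))) \<Longrightarrow>
          \<bar>f y - f z - ws n \<bullet> (y - z)\<bar> \<le> inverse (real (Suc n)) * (norm (y - x) + norm (z - x))"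
        using wm[of n] unfolding Eset_def by blast
      have 1: "\<bar>f y - f x - ws n \<bullet> (y - x)\<bar> \<le> inverse (real (Suc n)) * norm (y - x)"
        using E[of y x] y by simp
      have "\<bar>(ws n - g) \<bullet> (y - x)\<bar> \<le> norm (ws n - g) * norm (y - x)"
        by (rule Cauchy_Schwarz_ineq2)
      also have "\<dots> \<le> inverse (real (Suc n)) * norm (y - x)"
        by (intro mult_right_mono wg) auto
      finally have 2: "\<bar>(ws n - g) \<bullet> (y - x)\<bar> \<le> inverse (real (Suc n)) * norm (y - x)" .
      have 3: "f y - f x - g \<bullet> (y - x) = (f y - f x - ws n \<bullet> (y - x)) + (ws n - g) \<bullet> (y - x)"
        by (simp add: inner_diff_left)
      have "inverse (real (Suc n)) * norm (y - x) \<le> (e/2) * norm (y - x)"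
        using n by (intro mult_right_mono) auto
      moreover have "e/2 * norm (y - x) + e/2 * norm (y - x) = e * norm (y - x)" by (simp add: field_simps)
      moreover have "\<bar>(f y - f x - ws n \<bullet> (y - x)) + (ws n - g) \<bullet> (y - x)\<bar> \<le>
          \<bar>f y - f x - ws n \<bullet> (y - x)\<bar> + \<bar>(ws n - g) \<bullet> (y - x)\<bar>" by (rule abs_triangle_ineq)
      ultimately show ?thesis using 1 2 3 by (simp only: real_norm_def)
    qed
    then show "\<exists>d>0. \<forall>y\<in>UNIV. norm (y - x) < d \<longrightarrow> norm (f y - f x - g \<bullet> (y - x)) \<le> e * norm (y - x)"
      by (intro exI[of _ "inverse (real (Suc (ms n)))"]) auto
  qed
  then show ?thesis by blast
qed

lemma linear_repr:
  fixes L :: "'a::euclidean_space \<Rightarrow> real"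
  assumes "linear L"
  shows "L h = (\<Sum>b\<in>Basis. L b *\<^sub>R b) \<bullet> h"
proof -
  have "L h = L (\<Sum>b\<in>Basis. (h \<bullet> b) *\<^sub>R b)" by (simp add: euclidean_representation)
  also have "\<dots> = (\<Sum>b\<in>Basis. (h \<bullet> b) * L b)"
    using assms by (simp add: linear_sum linear_scale)
  also have "\<dots> = (\<Sum>b\<in>Basis. (L b *\<^sub>R b) \<bullet> h)"
    by (rule sum.cong) (simp_all add: inner_commute)
  also have "\<dots> = (\<Sum>b\<in>Basis. L b *\<^sub>R b) \<bullet> h"
    by (simp add: inner_sum_left)
  finally show ?thesis .
qed

lemma grad_deriv:
  fixes f :: "'a::euclidean_space \<Rightarrow> real"
  assumes "f differentiable (at x)"
  shows "(f has_derivative (\<lambda>h. grad f x \<bullet> h)) (at x)"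
proof -
  have d: "(f has_derivative frechet_derivative f (at x)) (at x)"
    using assms frechet_derivative_works by blast
  have "linear (frechet_derivative f (at x))"
    using d has_derivative_linear by blast
  then have "frechet_derivative f (at x) = (\<lambda>h. grad f x \<bullet> h)"
    unfolding grad_def by (intro ext linear_repr)
  with d show ?thesis by simp
qed

lemma grad_nondiff:
  fixes f :: "'a::euclidean_space \<Rightarrow> real"
  assumes "\<not> f differentiable (at x)"
  shows "grad f x = (\<Sum>b\<in>Basis. (SOME f'::'a \<Rightarrow> real. False) b *\<^sub>R b)"
proof -
  have "(\<lambda>f'. (f has_derivative f') (at x)) = (\<lambda>f'. False)"
    using assms unfolding differentiable_def by auto
  then have "frechet_derivative f (at x) = (SOME f'::'a \<Rightarrow> real. False)"
    unfolding frechet_derivative_def by simp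
  then show ?thesis unfolding grad_def by simp
qed


lemma arith_aux: "(0::real) < i \<Longrightarrow> i < (c - g) / 3 \<Longrightarrow> w - g \<le> i / 2 \<Longrightarrow> w < c - 2 * i"
  by argo

lemma arith_aux2: "(0::real) < i \<Longrightarrow> g - w \<le> i \<Longrightarrow> w < c - 2 * i \<Longrightarrow> g < c"
  by argo

lemma borel_measurable_grad:
  fixes f :: "'a::euclidean_space \<Rightarrow> real"
  shows "grad f \<in> borel_measurable borel"
proof -
  obtain W :: "'a set" where Wc: "countable W" and W: "\<And>X. open X \<Longrightarrow> X \<noteq> {} \<Longrightarrow> \<exists>d\<in>W. d \<in> X"
    using countable_dense_setE by blast
  define D where "D = {x. f differentiable (at x)}"
  define D' where "D' = (\<Inter>n. \<Union>w\<in>W. \<Union>m. Eset f w (inverse (real (Suc n))) (inverse (real (Suc m))))"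
  define C where "C = (\<Sum>b\<in>Basis. (SOME f'::'a \<Rightarrow> real. False) b *\<^sub>R b)"
  have DD': "D = D'"
  proof (intro set_eqI iffI)
    fix x assume "x \<in> D"
    then have der: "(f has_derivative (\<lambda>h. grad f x \<bullet> h)) (at x)" using grad_deriv D_def by blast
    show "x \<in> D'" unfolding D'_def
    proof (intro InterI, clarsimp)
      fix n
      obtain w where "w \<in> W" "\<exists>m. x \<in> Eset f w (inverse (real (Suc n))) (inverse (real (Suc m)))"
        using Eset_dense[OF W der, of "inverse (real (Suc n))"] by auto
      then show "\<exists>w\<in>W. \<exists>m. x \<in> Eset f w (inverse (1 + real n)) (inverse (1 + real m))" by auto
    qed
  next
    fix x assume "x \<in> D'"
    then have "\<forall>n. \<exists>w\<in>W. \<exists>m. x \<in> Eset f w (inverse (real (Suc n))) (inverse (real (Suc m)))"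
      unfolding D'_def by blast
    then obtain g where "(f has_derivative (\<lambda>h. g \<bullet> h)) (at x)" using Eset_limit by blast
    then show "x \<in> D" unfolding D_def using differentiableI by blast
  qed
  have Eb: "Eset f w e d \<in> sets borel" for w e d by (rule borel_closed[OF closed_Eset])
  have Um: "(\<Union>m. Eset f w e (inverse (real (Suc m)))) \<in> sets borel" for w e
    by (rule sets.countable_UN''[where X=UNIV]) (simp_all add: Eb)
  have Uw: "(\<Union>w\<in>V. \<Union>m. Eset f w e (inverse (real (Suc m)))) \<in> sets borel" if "V \<subseteq> W" for e V
    by (rule sets.countable_UN''[where X=V], rule countable_subset[OF that Wc], rule Um)
  have Db: "D \<in> sets borel" unfolding DD' D'_def
    by (rule sets.countable_INT''[where I=UNIV], simp, simp, rule Uw, simp)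
  have comp: "(\<lambda>x. grad f x \<bullet> b) \<in> borel_measurable borel" if b: "b \<in> Basis" for b
    unfolding borel_measurable_iff_less
  proof
    fix c :: real
    define B where "B = (\<Union>n. \<Union>w\<in>{w\<in>W. w \<bullet> b < c - 2 * inverse (real (Suc n))}.
        \<Union>m. Eset f w (inverse (real (Suc n))) (inverse (real (Suc m))))"
    have Bb: "B \<in> sets borel" unfolding B_def
      by (rule sets.countable_UN''[where X=UNIV], simp, rule Uw, simp)
    have key: "grad f x \<bullet> b < c \<longleftrightarrow> x \<in> B" if "x \<in> D" for x
    proof
      have der: "(f has_derivative (\<lambda>h. grad f x \<bullet> h)) (at x)" using grad_deriv D_def that by blast
      assume lt: "grad f x \<bullet> b < c"
      obtain n where n: "inverse (real (Suc n)) < (c - grad f x \<bullet> b) / 3"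
        using reals_Archimedean[of "(c - grad f x \<bullet> b) / 3"] lt by auto
      obtain w m where w: "w \<in> W" "norm (w - grad f x) \<le> inverse (real (Suc n)) / 2"
        "x \<in> Eset f w (inverse (real (Suc n))) (inverse (real (Suc m)))"
        using Eset_dense[OF W der, of "inverse (real (Suc n))"] by auto
      have "\<bar>(w - grad f x) \<bullet> b\<bar> \<le> norm (w - grad f x) * norm b" by (rule Cauchy_Schwarz_ineq2)
      then have "(w - grad f x) \<bullet> b \<le> inverse (real (Suc n)) / 2" using w(2) norm_Basis[OF b] by simp
      then have a: "w \<bullet> b - grad f x \<bullet> b \<le> inverse (real (Suc n)) / 2" by (simp add: inner_diff_left)
      have "0 < inverse (real (Suc n))" by simp
      then have "w \<bullet> b < c - 2 * inverse (real (Suc n))" using n a by (rule arith_aux)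
      then have "w \<in> {w\<in>W. w \<bullet> b < c - 2 * inverse (real (Suc n))}" using w(1) by simp
      then have "x \<in> (\<Union>w\<in>{w\<in>W. w \<bullet> b < c - 2 * inverse (real (Suc n))}.
          \<Union>m. Eset f w (inverse (real (Suc n))) (inverse (real (Suc m))))"
        using w(3) by (intro UN_I[of w]) (auto intro: UN_I[of m])
      then show "x \<in> B" unfolding B_def by (intro UN_I[of n]) simp_all
    next
      have der: "(f has_derivative (\<lambda>h. grad f x \<bullet> h)) (at x)" using grad_deriv D_def that by blast
      assume "x \<in> B"
      then obtain n where "x \<in> (\<Union>w\<in>{w\<in>W. w \<bullet> b < c - 2 * inverse (real (Suc n))}.
          \<Union>m. Eset f w (inverse (real (Suc n))) (inverse (real (Suc m))))"
        unfolding B_def by (rule UN_E)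
      then obtain w where w0: "w \<in> {w\<in>W. w \<bullet> b < c - 2 * inverse (real (Suc n))}"
          "x \<in> (\<Union>m. Eset f w (inverse (real (Suc n))) (inverse (real (Suc m))))"
        by (rule UN_E)
      from w0(2) obtain m where "x \<in> Eset f w (inverse (real (Suc n))) (inverse (real (Suc m)))"
        by (rule UN_E)
      with w0(1) have w: "w \<in> W" "w \<bullet> b < c - 2 * inverse (real (Suc n))"
        "x \<in> Eset f w (inverse (real (Suc n))) (inverse (real (Suc m)))" by auto
      have nw: "norm (w - grad f x) \<le> inverse (real (Suc n))"
        by (rule Eset_deriv_close[OF der w(3)]) simp
      have "\<bar>(w - grad f x) \<bullet> b\<bar> \<le> norm (w - grad f x) * norm b" by (rule Cauchy_Schwarz_ineq2)
      then have "- ((w - grad f x) \<bullet> b) \<le> inverse (real (Suc n))" using nw norm_Basis[OF b] by simp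
      then have gw: "grad f x \<bullet> b - w \<bullet> b \<le> inverse (real (Suc n))" by (simp add: inner_diff_left)
      have ipos: "0 < inverse (real (Suc n))" by simp
      show "grad f x \<bullet> b < c" by (rule arith_aux2[OF ipos gw w(2)])
    qed
    have nd: "grad f x = C" if "x \<notin> D" for x using grad_nondiff[of f x] that unfolding D_def C_def by blast
    define R where "R = (if C \<bullet> b < c then UNIV - D else {})"
    have "{x \<in> space borel. grad f x \<bullet> b < c} = (D \<inter> B) \<union> R"
    proof (intro set_eqI)
      fix x show "x \<in> {x \<in> space borel. grad f x \<bullet> b < c} \<longleftrightarrow> x \<in> (D \<inter> B) \<union> R"
      proof (cases "x \<in> D")
        case True then show ?thesis using key[OF True] unfolding R_def by simp
      next
        case False then show ?thesis using nd[OF False] unfolding R_def by simp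
      qed
    qed
    moreover have "R \<in> sets borel" unfolding R_def using Db by simp
    ultimately show "{x \<in> space borel. grad f x \<bullet> b < c} \<in> sets borel"
      using Db Bb by simp
  qed
  then show ?thesis by (subst borel_measurable_euclidean_space) blast
qed



lemma abs_le_1_sq: "\<bar>y::real\<bar> \<le> 1 + y\<^sup>2"
proof (cases "\<bar>y\<bar> \<le> 1")
  case True
  have "0 \<le> y\<^sup>2" by simp
  with True show ?thesis by linarith
next
  case False
  then have "\<bar>y\<bar> * 1 \<le> \<bar>y\<bar> * \<bar>y\<bar>" by (intro mult_left_mono) auto
  also have "\<bar>y\<bar> * \<bar>y\<bar> = y\<^sup>2" by (simp add: power2_eq_square abs_mult_self_eq)
  finally show ?thesis by simp
qed

lemma core_real:
  fixes M F :: "'s measure" and g a c :: "'s \<Rightarrow> real"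
  assumes fs: "finite_measure_subalgebra M F"
    and g: "integrable M g" and a: "a \<in> borel_measurable F" "integrable M a"
    and c: "c \<in> borel_measurable F"
    and dens: "\<And>A. A \<in> sets F \<Longrightarrow> (\<integral>x\<in>A. g x \<partial>M) = (\<integral>x\<in>A. a x \<partial>M)"
    and sq: "integrable M (\<lambda>x. (g x - c x)\<^sup>2)"
  shows "(\<integral>\<^sup>+x. ennreal ((a x - c x)\<^sup>2) \<partial>M) \<le> (\<integral>\<^sup>+x. ennreal ((g x - c x)\<^sup>2) \<partial>M)"
proof -
  interpret finite_measure_subalgebra M F by (rule fs)
  interpret sigma_finite_subalgebra M F by (rule finite_measure_subalgebra_is_sigma_finite[OF fs])
  have cM: "c \<in> borel_measurable M" by (rule measurable_from_subalg[OF subalg c])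
  have gM: "g \<in> borel_measurable M" using g by simp
  define Y where "Y = (\<lambda>x. g x - c x)"
  have YM: "Y \<in> borel_measurable M" unfolding Y_def using gM cM by simp
  have Yi: "integrable M Y"
  proof (rule Bochner_Integration.integrable_bound[where f = "\<lambda>x. 1 + (g x - c x)\<^sup>2"])
    show "integrable M (\<lambda>x. 1 + (g x - c x)\<^sup>2)" using sq by simp
    show "Y \<in> borel_measurable M" by (rule YM)
    show "AE x in M. norm (Y x) \<le> norm (1 + (g x - c x)\<^sup>2)"
    proof (rule AE_I2)
      fix x
      have "\<bar>Y x\<bar> \<le> 1 + (Y x)\<^sup>2" by (rule abs_le_1_sq)
      then show "norm (Y x) \<le> norm (1 + (g x - c x)\<^sup>2)" unfolding Y_def by simp
    qed
  qed
  have ci: "integrable M c"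
  proof -
    have "integrable M (\<lambda>x. g x - Y x)" using g Yi by simp
    then show ?thesis unfolding Y_def by simp
  qed
  have Eg: "AE x in M. real_cond_exp M F g x = a x"
    by (rule real_cond_exp_charact[OF dens g a(2) a(1)])
  have Ec: "AE x in M. real_cond_exp M F c x = c x"
    by (rule real_cond_exp_F_meas[OF ci c])
  have EY0: "AE x in M. real_cond_exp M F Y x = real_cond_exp M F g x - real_cond_exp M F c x"
    unfolding Y_def by (rule real_cond_exp_diff[OF g ci])
  have EY: "AE x in M. real_cond_exp M F Y x = a x - c x"
    using Eg Ec EY0 by eventually_elim simp
  have Ysq: "integrable M (\<lambda>x. (Y x)\<^sup>2)" using sq unfolding Y_def by simp
  have J: "AE x in M. (real_cond_exp M F Y x)\<^sup>2 \<le> real_cond_exp M F (\<lambda>x. (Y x)\<^sup>2) x"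
    using real_cond_exp_jensens_inequality(2)[OF Yi _ _ Ysq convex_power2, of 0 0] by simp
  have Ji: "integrable M (\<lambda>x. (real_cond_exp M F Y x)\<^sup>2)"
    using integrable_convex_cond_exp[OF Yi _ _ Ysq convex_power2, of 0 0] by simp
  have "(\<integral>\<^sup>+x. ennreal ((a x - c x)\<^sup>2) \<partial>M) = (\<integral>\<^sup>+x. ennreal ((real_cond_exp M F Y x)\<^sup>2) \<partial>M)"
    using EY by (intro nn_integral_cong_AE) auto
  also have "\<dots> = ennreal (\<integral>x. (real_cond_exp M F Y x)\<^sup>2 \<partial>M)"
    by (rule nn_integral_eq_integral[OF Ji]) simp
  also have "\<dots> \<le> ennreal (\<integral>x. real_cond_exp M F (\<lambda>x. (Y x)\<^sup>2) x \<partial>M)"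
    by (intro ennreal_leI integral_mono_AE Ji real_cond_exp_int(1)[OF Ysq] J)
  also have "(\<integral>x. real_cond_exp M F (\<lambda>x. (Y x)\<^sup>2) x \<partial>M) = (\<integral>x. (Y x)\<^sup>2 \<partial>M)"
    by (rule real_cond_exp_int(2)[OF Ysq])
  also have "ennreal (\<integral>x. (Y x)\<^sup>2 \<partial>M) = (\<integral>\<^sup>+x. ennreal ((Y x)\<^sup>2) \<partial>M)"
    by (rule nn_integral_eq_integral[OF Ysq, symmetric]) simp
  finally show ?thesis unfolding Y_def .
qed


lemma borel_measurable_Force:
  fixes \<Phi> K :: "'a::euclidean_space \<Rightarrow> real" and \<rho> :: "'a measure"
  assumes "sets \<rho> = sets borel" "finite_measure \<rho>"
  shows "(\<lambda>x. Force \<Phi> K x \<rho>) \<in> borel_measurable borel"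
proof -
  interpret finite_measure \<rho> by (rule assms(2))
  have gK[measurable]: "grad K \<in> borel_measurable borel" by (rule borel_measurable_grad)
  have gP[measurable]: "grad \<Phi> \<in> borel_measurable borel" by (rule borel_measurable_grad)
  have X: "(\<lambda>(x, y). grad K (x - y)) \<in> borel_measurable (borel \<Otimes>\<^sub>M borel)"
    by measurable
  have "sets (borel \<Otimes>\<^sub>M \<rho>) = sets (borel \<Otimes>\<^sub>M (borel :: 'a measure))"
    by (rule sets_pair_measure_cong[OF refl assms(1)])
  then have eq: "measurable (borel \<Otimes>\<^sub>M \<rho>) (borel :: 'a measure) = measurable (borel \<Otimes>\<^sub>M borel) borel"
    by (rule measurable_cong_sets[OF _ refl])
  have "(\<lambda>(x, y). grad K (x - y)) \<in> borel_measurable (borel \<Otimes>\<^sub>M \<rho>)"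
    unfolding eq by (rule X)
  then have "(\<lambda>x. \<integral>y. grad K (x - y) \<partial>\<rho>) \<in> borel_measurable borel"
    by (intro borel_measurable_lebesgue_integral) simp
  then show ?thesis unfolding Force_def by measurable
qed

lemma set_integral_inner_left:
  fixes f :: "'s \<Rightarrow> 'a::euclidean_space"
  assumes "integrable M f" "S \<in> sets M"
  shows "(LINT x:S|M. f x) \<bullet> b = (LINT x:S|M. f x \<bullet> b)"
proof -
  have i: "integrable M (\<lambda>x. indicator S x *\<^sub>R f x)" by (rule integrable_mult_indicator[OF assms(2,1)])
  have i': "b \<noteq> 0 \<Longrightarrow> integrable M (\<lambda>x. indicator S x *\<^sub>R f x)" using i by simp
  have "(LINT x:S|M. f x) \<bullet> b = (\<integral>x. (indicator S x *\<^sub>R f x) \<bullet> b \<partial>M)"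
    unfolding set_lebesgue_integral_def by (rule integral_inner_left[OF i', symmetric])
  also have "\<dots> = (LINT x:S|M. f x \<bullet> b)"
    unfolding set_lebesgue_integral_def by simp
  finally show ?thesis .
qed

lemma norm_sq_sum_Basis:
  fixes v :: "'a::euclidean_space"
  shows "ennreal ((norm v)\<^sup>2) = (\<Sum>b\<in>Basis. ennreal ((v \<bullet> b)\<^sup>2))"
proof -
  have "(norm v)\<^sup>2 = v \<bullet> v" by (rule power2_norm_eq_inner)
  also have "\<dots> = (\<Sum>b\<in>Basis. (v \<bullet> b) * (v \<bullet> b))" by (rule euclidean_inner)
  also have "\<dots> = (\<Sum>b\<in>Basis. (v \<bullet> b)\<^sup>2)" by (simp add: power2_eq_square)
  finally have "(norm v)\<^sup>2 = (\<Sum>b\<in>Basis. (v \<bullet> b)\<^sup>2)" .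
  then show ?thesis by simp
qed

lemma core_vec:
  fixes N :: "('a::euclidean_space \<times> 'a) measure" and G :: "'a \<times> 'a \<Rightarrow> 'a" and H J :: "'a \<Rightarrow> 'a"
  assumes N: "prob_space N" "sets N = sets borel"
    and G: "integrable N G" and H[measurable]: "H \<in> borel_measurable borel"
    and J[measurable]: "J \<in> borel_measurable borel" and Ji: "integrable N (\<lambda>q. J (fst q))"
    and dens: "\<And>A. A \<in> sets borel \<Longrightarrow> (LINT q:A \<times> UNIV|N. G q) = (LINT q:A \<times> UNIV|N. J (fst q))"
  shows "(\<integral>\<^sup>+q. ennreal ((norm (J (fst q) - H (fst q)))\<^sup>2) \<partial>N)
      \<le> (\<integral>\<^sup>+q. ennreal ((norm (G q - H (fst q)))\<^sup>2) \<partial>N)"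
proof (cases "(\<integral>\<^sup>+q. ennreal ((norm (G q - H (fst q)))\<^sup>2) \<partial>N) = \<infinity>")
  case True then show ?thesis by simp
next
  case False
  interpret prob_space N by (rule N(1))
  have spN: "space N = UNIV" using sets_eq_imp_space_eq[OF N(2)] by simp
  have fstm[measurable]: "fst \<in> borel_measurable (borel :: ('a \<times> 'a) measure)"
    by (intro borel_measurable_continuous_onI continuous_intros)
  have meas_cong: "measurable N = measurable borel" by (rule ext) (rule measurable_cong_sets[OF N(2) refl])
  have GM: "G \<in> borel_measurable borel" using G meas_cong by (metis borel_measurable_integrable)
  define F where "F = vimage_algebra (space N) fst (borel :: 'a measure)"
  have fF: "fst \<in> space N \<rightarrow> space (borel :: 'a measure)" by simp
  have setsF: "sets F = {fst -` A \<inter> space N | A. A \<in> sets borel}"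
    unfolding F_def by (rule sets_vimage_algebra2[OF fF])
  have AF: "A' \<in> sets F \<Longrightarrow> \<exists>A\<in>sets borel. A' = A \<times> UNIV" for A'
    unfolding setsF spN by (auto simp: vimage_fst)
  have subalg: "subalgebra N F"
    unfolding subalgebra_def
  proof
    show "sets F \<subseteq> sets N"
    proof
      fix A' assume "A' \<in> sets F"
      then obtain A where A: "A \<in> sets borel" "A' = A \<times> UNIV" using AF by blast
      have "fst -` A \<inter> space borel \<in> sets (borel :: ('a \<times> 'a) measure)"
        by (rule measurable_sets[OF fstm A(1)])
      then show "A' \<in> sets N" using A(2) N(2) by (simp add: vimage_fst)
    qed
    show "space F = space N" unfolding F_def by simp
  qed
  have fs: "finite_measure_subalgebra N F"
    unfolding finite_measure_subalgebra_def finite_measure_subalgebra_axioms_def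
    using subalg finite_measure_axioms by simp
  have compF: "(\<lambda>q. u (fst q)) \<in> borel_measurable F" if u: "u \<in> borel_measurable borel" for u :: "'a \<Rightarrow> real"
  proof -
    have "fst \<in> measurable F borel" unfolding F_def by (rule measurable_vimage_algebra1[OF fF])
    then show ?thesis using measurable_compose[OF _ u] by blast
  qed
  have sqi: "integrable N (\<lambda>q. (norm (G q - H (fst q)))\<^sup>2)"
  proof (rule integrableI_bounded)
    show "(\<lambda>q. (norm (G q - H (fst q)))\<^sup>2) \<in> borel_measurable N"
      unfolding meas_cong using GM by measurable
    show "(\<integral>\<^sup>+q. ennreal (norm ((norm (G q - H (fst q)))\<^sup>2)) \<partial>N) < \<infinity>"
      using False by (simp add: top.not_eq_extremum)
  qed
  have comp: "(\<integral>\<^sup>+q. ennreal ((J (fst q) \<bullet> b - H (fst q) \<bullet> b)\<^sup>2) \<partial>N)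
      \<le> (\<integral>\<^sup>+q. ennreal ((G q \<bullet> b - H (fst q) \<bullet> b)\<^sup>2) \<partial>N)" if b: "b \<in> Basis" for b
  proof (rule core_real[OF fs])
    show "integrable N (\<lambda>q. G q \<bullet> b)" using G by simp
    show "(\<lambda>q. J (fst q) \<bullet> b) \<in> borel_measurable F" by (rule compF) measurable
    show "integrable N (\<lambda>q. J (fst q) \<bullet> b)" using Ji by simp
    show "(\<lambda>q. H (fst q) \<bullet> b) \<in> borel_measurable F" by (rule compF) measurable
    show "(\<integral>q\<in>A'. G q \<bullet> b \<partial>N) = (\<integral>q\<in>A'. J (fst q) \<bullet> b \<partial>N)" if A'F: "A' \<in> sets F" for A'
    proof -
      obtain A where A: "A \<in> sets borel" "A' = A \<times> UNIV" using AF[OF A'F] by blast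
      have AN: "A \<times> UNIV \<in> sets N" using subalg A'F A(2) unfolding subalgebra_def by blast
      have "(\<integral>q\<in>A'. G q \<bullet> b \<partial>N) = (LINT q:A \<times> UNIV|N. G q) \<bullet> b"
        using A(2) set_integral_inner_left[OF G AN] by simp
      also have "\<dots> = (LINT q:A \<times> UNIV|N. J (fst q)) \<bullet> b" using dens[OF A(1)] by simp
      also have "\<dots> = (\<integral>q\<in>A'. J (fst q) \<bullet> b \<partial>N)"
        using A(2) set_integral_inner_left[OF Ji AN] by simp
      finally show ?thesis .
    qed
    show "integrable N (\<lambda>q. (G q \<bullet> b - H (fst q) \<bullet> b)\<^sup>2)"
    proof (rule Bochner_Integration.integrable_bound[OF sqi])
      show "(\<lambda>q. (G q \<bullet> b - H (fst q) \<bullet> b)\<^sup>2) \<in> borel_measurable N"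
        unfolding meas_cong using GM by measurable
      show "AE q in N. norm ((G q \<bullet> b - H (fst q) \<bullet> b)\<^sup>2) \<le> norm ((norm (G q - H (fst q)))\<^sup>2)"
      proof (rule AE_I2)
        fix q
        have "\<bar>(G q - H (fst q)) \<bullet> b\<bar> \<le> \<bar>norm (G q - H (fst q))\<bar>" using Basis_le_norm[OF b] by simp
        then have "((G q - H (fst q)) \<bullet> b)\<^sup>2 \<le> (norm (G q - H (fst q)))\<^sup>2" by (simp only: abs_le_square_iff)
        then show "norm ((G q \<bullet> b - H (fst q) \<bullet> b)\<^sup>2) \<le> norm ((norm (G q - H (fst q)))\<^sup>2)"
          by (simp add: inner_diff_left)
      qed
    qed
  qed
  have "(\<integral>\<^sup>+q. ennreal ((norm (J (fst q) - H (fst q)))\<^sup>2) \<partial>N)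
      = (\<integral>\<^sup>+q. (\<Sum>b\<in>Basis. ennreal (((J (fst q) - H (fst q)) \<bullet> b)\<^sup>2)) \<partial>N)"
    by (simp only: norm_sq_sum_Basis)
  also have "\<dots> = (\<Sum>b\<in>Basis. (\<integral>\<^sup>+q. ennreal ((J (fst q) \<bullet> b - H (fst q) \<bullet> b)\<^sup>2) \<partial>N))"
    by (subst nn_integral_sum) (simp_all add: inner_diff_left meas_cong)
  also have "\<dots> \<le> (\<Sum>b\<in>Basis. (\<integral>\<^sup>+q. ennreal ((G q \<bullet> b - H (fst q) \<bullet> b)\<^sup>2) \<partial>N))"
    by (rule sum_mono) (rule comp)
  also have "\<dots> = (\<integral>\<^sup>+q. (\<Sum>b\<in>Basis. ennreal (((G q - H (fst q)) \<bullet> b)\<^sup>2)) \<partial>N)"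
    using GM by (subst nn_integral_sum) (simp_all add: inner_diff_left meas_cong)
  also have "\<dots> = (\<integral>\<^sup>+q. ennreal ((norm (G q - H (fst q)))\<^sup>2) \<partial>N)"
    by (simp only: norm_sq_sum_Basis)
  finally show ?thesis .
qed


theorem lemma3p9:
  fixes \<gamma> :: real and \<Phi> K :: "'a::euclidean_space \<Rightarrow> real"
    and \<mu> :: "real \<Rightarrow> ('a \<times> 'a) measure" and t :: real and J :: "'a \<Rightarrow> 'a"
  assumes "\<gamma> > 0" and "\<forall>x. \<Phi> x \<ge> 0"
    and "weak_solution \<gamma> \<Phi> K \<mu>" and "t \<ge> 0"
  defines "\<rho> \<equiv> distr (\<mu> t) borel pix"
    and "\<rho>bar \<equiv> distr (\<mu> t) borel (pix \<circ> Gam \<gamma>)"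
    and "\<nu> \<equiv> distr (\<mu> t) borel (Gam \<gamma>)"
  assumes jbar_def: "integrable \<nu> (\<lambda>p. Force \<Phi> K (fst p - (1/\<gamma>) *\<^sub>R snd p) \<rho>)"
    and J_meas: "J \<in> borel_measurable borel" and J_int: "integrable \<rho>bar J"
    and J_density: "\<forall>A\<in>sets borel.
          (LINT p:A \<times> UNIV|\<nu>. Force \<Phi> K (fst p - (1/\<gamma>) *\<^sub>R snd p) \<rho>) = (LINT x:A|\<rho>bar. J x)"
  shows "(\<integral>\<^sup>+x. ennreal ((norm (J x - Force \<Phi> K x \<rho>bar))\<^sup>2) \<partial>\<rho>bar)
         \<le> (\<integral>\<^sup>+p. ennreal ((norm (Force \<Phi> K (fst p) \<rho>
                 - Force \<Phi> K (fst p + (1/\<gamma>) *\<^sub>R snd p) \<rho>bar))\<^sup>2) \<partial>\<mu> t)"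
proof -
  have ws: "prob_space (\<mu> t)" "sets (\<mu> t) = sets borel"
    using assms(3,4) unfolding weak_solution_def by auto
  interpret M: prob_space "\<mu> t" by (rule ws(1))
  have Gb: "Gam \<gamma> \<in> borel_measurable (borel :: ('a \<times> 'a) measure)"
  proof -
    have "Gam \<gamma> = (\<lambda>p::'a \<times> 'a. (fst p + (1/\<gamma>) *\<^sub>R snd p, snd p))"
      by (rule ext) (simp add: Gam_def)
    also have "\<dots> \<in> borel_measurable borel"
      by (intro borel_measurable_continuous_onI continuous_intros)
    finally show ?thesis .
  qed
  have fstb[measurable]: "fst \<in> borel_measurable (borel :: ('a \<times> 'a) measure)"
    by (intro borel_measurable_continuous_onI continuous_intros)
  have mcM: "measurable (\<mu> t) (borel :: ('a \<times> 'a) measure) = measurable borel borel"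
    by (rule measurable_cong_sets[OF ws(2) refl])
  have GM: "Gam \<gamma> \<in> measurable (\<mu> t) borel" using Gb mcM by simp
  have sN: "sets \<nu> = sets borel" unfolding \<nu>_def by simp
  have pN: "prob_space \<nu>" unfolding \<nu>_def by (rule M.prob_space_distr[OF GM])
  have mcN: "measurable \<nu> (borel :: 'a measure) = measurable borel borel"
    by (rule measurable_cong_sets[OF sN refl])
  have rb: "\<rho>bar = distr \<nu> borel fst"
  proof -
    have "distr \<nu> borel fst = distr (\<mu> t) borel (fst \<circ> Gam \<gamma>)"
      unfolding \<nu>_def by (rule distr_distr[OF fstb GM])
    also have "fst \<circ> Gam \<gamma> = pix \<circ> Gam \<gamma>" by (simp add: pix_def[abs_def] comp_def)
    finally show ?thesis unfolding \<rho>bar_def by (simp add: comp_def)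
  qed
  have fstN: "fst \<in> measurable \<nu> borel" using sN by (simp add: measurable_cong_sets[OF sN refl])
  have srb: "sets \<rho>bar = sets borel" unfolding \<rho>bar_def by simp
  have frb: "finite_measure \<rho>bar" unfolding rb
    using prob_space.prob_space_distr[OF pN fstN] by (simp add: prob_space_def)
  define H where "H = (\<lambda>x. Force \<Phi> K x \<rho>bar)"
  define G where "G = (\<lambda>p. Force \<Phi> K (fst p - (1/\<gamma>) *\<^sub>R snd p) \<rho>)"
  have Hm[measurable]: "H \<in> borel_measurable borel"
    unfolding H_def by (rule borel_measurable_Force[OF srb frb])
  have Gi: "integrable \<nu> G" unfolding G_def by (rule jbar_def)
  have GN: "G \<in> borel_measurable borel" using borel_measurable_integrable[OF Gi] mcN
    by (metis measurable_cong_sets[OF sN refl])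
  have Jm[measurable]: "J \<in> borel_measurable borel" by (rule J_meas)
  have Ji: "integrable \<nu> (\<lambda>q. J (fst q))"
    using J_int unfolding rb by (subst (asm) integrable_distr_eq[OF fstN J_meas])
  have dens: "(LINT q:A \<times> UNIV|\<nu>. G q) = (LINT q:A \<times> UNIV|\<nu>. J (fst q))" if A: "A \<in> sets borel" for A
  proof -
    have "(LINT q:A \<times> UNIV|\<nu>. G q) = (LINT x:A|\<rho>bar. J x)" using J_density A unfolding G_def by blast
    also have "\<dots> = (\<integral>x. indicator A x *\<^sub>R J x \<partial>(distr \<nu> borel fst))"
      unfolding set_lebesgue_integral_def rb ..
    also have "\<dots> = (\<integral>q. indicator A (fst q) *\<^sub>R J (fst q) \<partial>\<nu>)"
      by (rule integral_distr[OF fstN]) (use A in measurable)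
    also have "\<dots> = (LINT q:A \<times> UNIV|\<nu>. J (fst q))"
      unfolding set_lebesgue_integral_def
      by (rule Bochner_Integration.integral_cong[OF refl]) (simp add: indicator_def mem_Times_iff)
    finally show ?thesis .
  qed
  have core: "(\<integral>\<^sup>+q. ennreal ((norm (J (fst q) - H (fst q)))\<^sup>2) \<partial>\<nu>)
      \<le> (\<integral>\<^sup>+q. ennreal ((norm (G q - H (fst q)))\<^sup>2) \<partial>\<nu>)"
    by (rule core_vec[OF pN sN Gi Hm Jm Ji dens])
  have L: "(\<integral>\<^sup>+x. ennreal ((norm (J x - Force \<Phi> K x \<rho>bar))\<^sup>2) \<partial>\<rho>bar)
      = (\<integral>\<^sup>+q. ennreal ((norm (J (fst q) - H (fst q)))\<^sup>2) \<partial>\<nu>)"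
  proof -
    have "(\<integral>\<^sup>+x. ennreal ((norm (J x - H x))\<^sup>2) \<partial>(distr \<nu> borel fst))
        = (\<integral>\<^sup>+q. ennreal ((norm (J (fst q) - H (fst q)))\<^sup>2) \<partial>\<nu>)"
      by (rule nn_integral_distr[OF fstN]) simp
    then show ?thesis unfolding H_def by (simp only: rb[symmetric])
  qed
  have R: "(\<integral>\<^sup>+q. ennreal ((norm (G q - H (fst q)))\<^sup>2) \<partial>\<nu>)
      = (\<integral>\<^sup>+p. ennreal ((norm (Force \<Phi> K (fst p) \<rho>
                 - Force \<Phi> K (fst p + (1/\<gamma>) *\<^sub>R snd p) \<rho>bar))\<^sup>2) \<partial>\<mu> t)"
  proof -
    have "(\<integral>\<^sup>+q. ennreal ((norm (G q - H (fst q)))\<^sup>2) \<partial>\<nu>)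
        = (\<integral>\<^sup>+p. ennreal ((norm (G (Gam \<gamma> p) - H (fst (Gam \<gamma> p))))\<^sup>2) \<partial>\<mu> t)"
      unfolding \<nu>_def by (rule nn_integral_distr[OF GM]) (use GN in measurable)
    also have "\<dots> = (\<integral>\<^sup>+p. ennreal ((norm (Force \<Phi> K (fst p) \<rho>
                 - Force \<Phi> K (fst p + (1/\<gamma>) *\<^sub>R snd p) \<rho>bar))\<^sup>2) \<partial>\<mu> t)"
      by (simp add: G_def H_def Gam_def)
    finally show ?thesis .
  qed
  show ?thesis using core L R by simp
qed

end
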